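(* Let $\|\cdot\|$ be a Euclidean norm on $\mathbb{R}^d$ and $|\cdot|$ another norm on $\mathbb{R}^d$. Then there exists $\lambda<1$ (depending on the equivalence constants of the two norms) such that every curve $\gamma:I\to\mathbb{R}^d$ that is self-expanded with respect to $|\cdot|$ is a $\lambda$-curve with respect to $\|\cdot\|$.
   Context: $I\subset\mathbb{R}$ is an interval. A curve $\gamma:I\to\mathbb{R}^d$ is self-expanded with respect to a norm $|\cdot|$ if for all $t_1\le t_2\le t_3$ in $I$: $|\gamma(t_1)-\gamma(t_2)|\le|\gamma(t_1)-\gamma(t_3)|$. For $\lambda<1$, $\gamma$ is a $\lambda$-curve with respect to $\|\cdot\|$ if for all $t_1\le t_2\le t_3$ in $I$: $\|\gamma(t_1)-\gamma(t_2)\|\le\|\gamma(t_1)-\gamma(t_3)\|+\lambda\|\gamma(t_2)-\gamma(t_3)\|$. *)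

theory Defs
  imports "HOL-Analysis.Analysis"
begin

text \<open>A norm on the space R^d (represented as real^'n, d = CARD('n)).\<close>
definition is_norm :: "(real^'n \<Rightarrow> real) \<Rightarrow> bool" where
  "is_norm N \<longleftrightarrow>
     (\<forall>x. 0 \<le> N x) \<and> (\<forall>x. N x = 0 \<longleftrightarrow> x = 0) \<and>
     (\<forall>c x. N (c *\<^sub>R x) = \<bar>c\<bar> * N x) \<and>
     (\<forall>x y. N (x + y) \<le> N x + N y)"

definition is_inner_product :: "(real^'n \<Rightarrow> real^'n \<Rightarrow> real) \<Rightarrow> bool" where
  "is_inner_product B \<longleftrightarrow>
     (\<forall>x y. B x y = B y x) \<and>
     (\<forall>x y z. B (x + y) z = B x z + B y z) \<and>
     (\<forall>c x y. B (c *\<^sub>R x) y = c * B x y) \<and>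
     (\<forall>x. x \<noteq> 0 \<longrightarrow> 0 < B x x)"

definition euclidean_norm :: "(real^'n \<Rightarrow> real) \<Rightarrow> bool" where
  "euclidean_norm N \<longleftrightarrow> (\<exists>B. is_inner_product B \<and> (\<forall>x. N x = sqrt (B x x)))"

definition self_expanded :: "(real^'n \<Rightarrow> real) \<Rightarrow> real set \<Rightarrow> (real \<Rightarrow> real^'n) \<Rightarrow> bool" where
  "self_expanded N I \<gamma> \<longleftrightarrow>
     (\<forall>t1\<in>I. \<forall>t2\<in>I. \<forall>t3\<in>I. t1 \<le> t2 \<and> t2 \<le> t3 \<longrightarrow>
        N (\<gamma> t1 - \<gamma> t2) \<le> N (\<gamma> t1 - \<gamma> t3))"

definition lambda_curve :: "real \<Rightarrow> (real^'n \<Rightarrow> real) \<Rightarrow> real set \<Rightarrow> (real \<Rightarrow> real^'n) \<Rightarrow> bool" where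
  "lambda_curve l N I \<gamma> \<longleftrightarrow>
     (\<forall>t1\<in>I. \<forall>t2\<in>I. \<forall>t3\<in>I. t1 \<le> t2 \<and> t2 \<le> t3 \<longrightarrow>
        N (\<gamma> t1 - \<gamma> t2) \<le> N (\<gamma> t1 - \<gamma> t3) + l * N (\<gamma> t2 - \<gamma> t3))"

end

theory Submission
  imports Defs
begin

lemma ip_basic:
  assumes B: "is_inner_product B"
  shows "B 0 y = 0" "B x 0 = 0" "B (x + y) z = B x z + B y z" "B z (x + y) = B z x + B z y"
    "B (c *\<^sub>R x) y = c * B x y" "B x (c *\<^sub>R y) = c * B x y" "B x y = B y x"
    "B (x - y) z = B x z - B y z" "B z (x - y) = B z x - B z y" "B (- x) y = - B x y" "B x (- y) = - B x y"
    "0 \<le> B x x" "B x x = 0 \<longleftrightarrow> x = 0"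
proof -
  have sym: "\<And>x y. B x y = B y x" and add: "\<And>x y z. B (x + y) z = B x z + B y z"
    and sc: "\<And>c x y. B (c *\<^sub>R x) y = c * B x y" and pos: "\<And>x. x \<noteq> 0 \<Longrightarrow> 0 < B x x"
    using B unfolding is_inner_product_def by auto
  show z1: "B 0 y = 0" for y using sc[of 0 0 y] by simp
  show "B x 0 = 0" using z1 sym by metis
  show "B (x + y) z = B x z + B y z" by (rule add)
  show "B z (x + y) = B z x + B z y" using add sym by metis
  show "B (c *\<^sub>R x) y = c * B x y" by (rule sc)
  show "B x (c *\<^sub>R y) = c * B x y" using sc sym by metis
  show "B x y = B y x" by (rule sym)
  have neg: "B (- x) y = - B x y" for x y using sc[of "-1" x y] by simp
  show "B (- x) y = - B x y" by (rule neg)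
  show "B x (- y) = - B x y" using neg sym by metis
  show "B (x - y) z = B x z - B y z" using add[of x "-y" z] neg by simp
  show "B z (x - y) = B z x - B z y" using add[of x "-y" z] neg sym by (metis diff_conv_add_uminus)
  show "0 \<le> B x x" using pos[of x] z1 by (cases "x = 0") auto
  show "B x x = 0 \<longleftrightarrow> x = 0" using pos[of x] z1 by (cases "x = 0") auto
qed

lemma core:
  fixes B :: "real^'n \<Rightarrow> real^'n \<Rightarrow> real" and N :: "real^'n \<Rightarrow> real"
  assumes B: "is_inner_product B" and Nn: "is_norm N"
    and eq: "\<forall>x. a * sqrt (B x x) \<le> N x \<and> N x \<le> b * sqrt (B x x)"
    and a: "0 < a" and b: "0 < b"
    and le: "N (v + w) \<le> N v"
  shows "sqrt (B (v + w) (v + w)) \<le> sqrt (B v v) + (1 - (1 - b / sqrt (a^2 + b^2)) / (b / a + 2)) * sqrt (B w w)"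
proof -
  note ip = ip_basic[OF B]
  have N0: "\<And>x. 0 \<le> N x" and Nz: "\<And>x. N x = 0 \<longleftrightarrow> x = 0"
    and Nsc: "\<And>c x. N (c *\<^sub>R x) = \<bar>c\<bar> * N x" and Ntr: "\<And>x y. N (x + y) \<le> N x + N y"
    using Nn unfolding is_norm_def by auto
  define s where "s = b / sqrt (a^2 + b^2)"
  define M where "M = b / a + 1"
  define l where "l = 1 - (1 - s) / (M + 1)"
  have l_eq: "1 - (1 - b / sqrt (a^2 + b^2)) / (b / a + 2) = l"
    unfolding l_def s_def M_def by (simp add: add.assoc)
  have sq: "sqrt (a^2+b^2) > b" using a b
    by (intro real_less_rsqrt) simp
  have s0: "0 < s" and s1: "s < 1" proof -
    have "0 < sqrt (a^2+b^2)" using sq b by linarith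
    then show "0 < s" "s < 1" using sq b unfolding s_def by (auto simp: divide_less_eq)
  qed
  have M0: "M > 0" unfolding M_def using a b divide_pos_pos[of b a] by linarith
  define p where "p = B v v"
  define q where "q = B v w"
  define r where "r = B w w"
  have p0: "p \<ge> 0" and r0: "r \<ge> 0" unfolding p_def r_def using ip by auto
  have expand: "B (v + w) (v + w) = p + 2*q + r" unfolding p_def q_def r_def
    using ip(3)[of v w "v + w"] ip(4)[of v v w] ip(4)[of w v w] ip(7)[of w v] by simp
  show ?thesis
  proof (cases "v = 0")
    case True
    then have "N w = 0" using le N0[of w] Nz[of 0] by simp
    then have "w = 0" using Nz[of w] by simp
    then show ?thesis using True ip(1)[of 0] by simp
  next
    case False
    then have pp: "p > 0" unfolding p_def using ip(12)[of v] ip(13)[of v] by auto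
    define k where "k = q / p"
    define wp where "wp = w - k *\<^sub>R v"
    have wpexp: "B wp wp = r - q^2/p"
    proof -
      have "B wp wp = B w w - k * B v w - k * B w v + k * (k * B v v)"
        unfolding wp_def ip(8)[of w "k *\<^sub>R v"] ip(9)[of _ w "k *\<^sub>R v"] ip(5)[of k v] ip(6)[of _ k v]
        by (simp add: algebra_simps)
      also have "\<dots> = r - 2*k*q + k^2*p" unfolding p_def q_def r_def using ip(7)[of w v]
        by (simp add: power2_eq_square algebra_simps)
      also have "\<dots> = r - q^2/p" unfolding k_def using pp by (simp add: field_simps power2_eq_square)
      finally show ?thesis .
    qed
    have CS: "q^2 \<le> p * r"
    proof -
      have "p * B wp wp + q^2 = p * r" using wpexp pp by (simp add: field_simps)
      moreover have "0 \<le> p * B wp wp" using ip(12)[of wp] pp by simp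
      ultimately show ?thesis by linarith
    qed
    have key: "q^2 * (a^2+b^2) \<le> b^2 * p * r" if qp: "q > 0"
    proof -
      have k0: "k > 0" unfolding k_def using qp pp by simp
      have "(1 + k) *\<^sub>R v = (v + w) + (- wp)" unfolding wp_def by (simp add: algebra_simps)
      then have "N ((1 + k) *\<^sub>R v) \<le> N (v + w) + N (- wp)" using Ntr by metis
      moreover have "N (- wp) = N wp" using Nsc[of "-1" wp] by simp
      moreover have "N ((1 + k) *\<^sub>R v) = (1 + k) * N v" using Nsc k0 by simp
      ultimately have "k * N v \<le> N wp" using le by (simp add: algebra_simps)
      moreover have "a * sqrt p \<le> N v" "N wp \<le> b * sqrt (B wp wp)" using eq[rule_format, of v] eq[rule_format, of wp] unfolding p_def by auto
      ultimately have h: "k * a * sqrt p \<le> b * sqrt (B wp wp)" using k0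
        by (smt (verit, best) mult.assoc mult_left_mono)
      have "0 \<le> k * a * sqrt p" using k0 a p0 by simp
      then have "(k * a * sqrt p)^2 \<le> (b * sqrt (B wp wp))^2" using h power_mono by blast
      then have "k^2 * a^2 * p \<le> b^2 * (r - q^2/p)"
        using p0 ip(12)[of wp] wpexp by (simp add: power_mult_distrib)
      then have "(q/p)^2 * a^2 * p * p \<le> b^2 * (r - q^2/p) * p" unfolding k_def using pp
        by (simp add: mult_right_mono)
      then have "p * (q^2 * (a^2+b^2)) \<le> p * (b^2 * p * r)" using pp by (simp add: field_simps power2_eq_square)
      then show ?thesis using pp by (simp add: mult_le_cancel_left_pos)
    qed
    define P where "P = sqrt p"
    define R where "R = sqrt r"
    have P0: "P > 0" and R0: "R \<ge> 0" unfolding P_def R_def using pp r0 by auto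
    have pP: "p = P^2" and rR: "r = R^2" unfolding P_def R_def using pp r0 by auto
    have qlow: "- q \<le> P * R"
    proof -
      have "sqrt (q^2) \<le> sqrt (p*r)" using CS real_sqrt_le_mono by blast
      then have "\<bar>q\<bar> \<le> P * R" unfolding P_def R_def by (simp add: real_sqrt_mult)
      then show ?thesis by linarith
    qed
    have qup: "q \<le> s * P * R"
    proof (cases "q > 0")
      case False then show ?thesis using s0 P0 R0 by (smt (verit) mult_nonneg_nonneg)
    next
      case True
      have ab: "a^2 + b^2 > 0" using a by (simp add: add_pos_nonneg)
      have "q^2 \<le> b^2 * p * r / (a^2+b^2)" using key[OF True] ab by (simp add: field_simps)
      also have "\<dots> = s^2 * p * r" unfolding s_def using ab by (simp add: power_divide)
      finally have "sqrt (q^2) \<le> sqrt (s^2 * p * r)" using real_sqrt_le_mono by blast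
      then show ?thesis using True s0 unfolding P_def R_def by (simp add: real_sqrt_mult)
    qed
    have "a * sqrt (B (v + w) (v + w)) \<le> b * P" using eq[rule_format, of "v + w"] eq[rule_format, of v] le unfolding P_def p_def
      by linarith
    then have "sqrt (p + 2*q + r) * a \<le> b * P" using expand by (simp only: mult.commute)
    then have "sqrt (p + 2*q + r) \<le> (b/a) * P" using a by (simp add: pos_le_divide_eq)
    moreover have nn: "p + 2*q + r \<ge> 0" using expand ip(12) by metis
    ultimately have "(sqrt (p + 2*q + r))^2 \<le> ((b/a) * P)^2"
      by (intro power_mono real_sqrt_ge_zero) auto
    then have U: "P^2 + 2*q + R^2 \<le> ((b/a) * P)^2" using nn pP rR by simp
    have "(R - P)^2 \<le> ((b/a) * P)^2" using U qlow by (simp add: power2_eq_square algebra_simps)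
    then have "\<bar>R - P\<bar> \<le> \<bar>(b/a) * P\<bar>" using abs_le_square_iff by blast
    then have RM: "R \<le> M * P" unfolding M_def using a b P0 by (simp add: algebra_simps)
    define d where "d = (1 - s) / (M + 1)"
    have d0: "d > 0" and d1: "d \<le> 1" unfolding d_def using s0 s1 M0 by (auto simp: field_simps)
    have ld: "l = 1 - d" unfolding l_def d_def by simp
    have dM: "d * (M + 1) = 1 - s" unfolding d_def using M0 by simp
    have "p + 2*q + r \<le> (P + l*R)^2"
    proof -
      have "p + 2*q + r \<le> P^2 + 2 * s * P * R + R^2" using qup pP rR by simp
      also have "\<dots> \<le> (P + l*R)^2"
      proof -
        have e: "(P + l*R)^2 - (P^2 + 2 * s * P * R + R^2) = 2*d*M*P*R - d*(2-d)*R^2"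
        proof -
          have hs: "s = 1 - d - M*d" using dM by (simp add: algebra_simps)
          show ?thesis unfolding ld hs by (simp add: power2_eq_square algebra_simps)
        qed
        have "d*(2-d)*R^2 \<le> 2*d*R*R" using d0 R0 by (simp add: power2_eq_square mult_mono)
        also have "\<dots> \<le> 2*d*R*(M*P)" using RM d0 R0 by (simp add: mult_left_mono)
        finally show ?thesis using e by (simp add: algebra_simps)
      qed
      finally show ?thesis .
    qed
    moreover have "0 \<le> P + l*R" using ld d1 P0 R0 by simp
    ultimately have "sqrt (p + 2*q + r) \<le> P + l*R" by (simp add: real_sqrt_le_iff real_le_lsqrt)
    then show ?thesis using expand l_eq unfolding P_def R_def p_def r_def by simp
  qed
qed

theorem proposition2p2:
  fixes a b :: real
  assumes "0 < a" and "0 < b"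
  shows "\<exists>l < 1. \<forall>(E :: real^'n \<Rightarrow> real) (N :: real^'n \<Rightarrow> real) (I :: real set) (\<gamma> :: real \<Rightarrow> real^'n).
           euclidean_norm E \<longrightarrow> is_norm N \<longrightarrow>
           (\<forall>x. a * E x \<le> N x \<and> N x \<le> b * E x) \<longrightarrow>
           is_interval I \<longrightarrow> self_expanded N I \<gamma> \<longrightarrow> lambda_curve l E I \<gamma>"
proof (intro exI conjI allI impI)
  have sq: "sqrt (a^2+b^2) > b" using assms
    by (intro real_less_rsqrt) simp
  have "0 < sqrt (a^2+b^2)" using sq assms by linarith
  then have s1: "b / sqrt (a^2 + b^2) < 1" using sq by (auto simp: divide_less_eq)
  have "0 < b / a + 2" using assms divide_pos_pos[of b a] by linarith
  then show "1 - (1 - b / sqrt (a^2 + b^2)) / (b / a + 2) < 1" using s1 by simp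
next
  fix E N :: "real^'n \<Rightarrow> real" and I and \<gamma> :: "real \<Rightarrow> real^'n"
  assume En: "euclidean_norm E" and Nn: "is_norm N" and eq: "\<forall>x. a * E x \<le> N x \<and> N x \<le> b * E x"
    and se: "self_expanded N I \<gamma>"
  obtain B where B: "is_inner_product B" and EB: "\<And>x. E x = sqrt (B x x)"
    using En unfolding euclidean_norm_def by blast
  note ip = ip_basic[OF B]
  have eq': "\<forall>x. a * sqrt (B x x) \<le> N x \<and> N x \<le> b * sqrt (B x x)" using eq EB by simp
  show "lambda_curve (1 - (1 - b / sqrt (a^2 + b^2)) / (b / a + 2)) E I \<gamma>"
    unfolding lambda_curve_def
  proof (intro ballI impI)
    fix t1 t2 t3 assume t: "t1 \<in> I" "t2 \<in> I" "t3 \<in> I" "t1 \<le> t2 \<and> t2 \<le> t3"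
    define v where "v = \<gamma> t1 - \<gamma> t3"
    define w where "w = \<gamma> t3 - \<gamma> t2"
    have vw: "v + w = \<gamma> t1 - \<gamma> t2" unfolding v_def w_def by simp
    have "N (\<gamma> t1 - \<gamma> t2) \<le> N v" unfolding v_def
      using se[unfolded self_expanded_def, rule_format, OF t(1) t(2) t(3) t(4)] .
    then have le: "N (v + w) \<le> N v" unfolding vw .
    have c: "sqrt (B (v + w) (v + w)) \<le> sqrt (B v v) + (1 - (1 - b / sqrt (a^2 + b^2)) / (b / a + 2)) * sqrt (B w w)"
      by (rule core[OF B Nn eq' assms le])
    have "\<gamma> t2 - \<gamma> t3 = - w" unfolding w_def by simp
    then have "B (\<gamma> t2 - \<gamma> t3) (\<gamma> t2 - \<gamma> t3) = B w w" using ip(10)[of w] ip(11)[of w w] by simp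
    then show "E (\<gamma> t1 - \<gamma> t2) \<le> E (\<gamma> t1 - \<gamma> t3) + (1 - (1 - b / sqrt (a^2 + b^2)) / (b / a + 2)) * E (\<gamma> t2 - \<gamma> t3)"
      using c unfolding EB vw[symmetric] v_def[symmetric] by (simp only:)
  qed
qed

end
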